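(* For every binary matrix $P$ such that $Q_1\preccurlyeq P$, where $Q_1\in\{0,1\}^{3\times 3}$ has $\mathrm{supp}(Q_1)=\{(1,2),(2,1),(3,3)\}$, the class $\mathrm{Av}(P)$ is row-unbounded.
   Context: All matrices are binary; rows are numbered top to bottom, columns left to right; $(i,j)$ is the entry in row $i$, column $j$, a 1-entry if it equals 1; $\mathrm{supp}$ is the set of 1-entries. For integers, $(a,b]=\{a+1,\dots,b\}$. A pattern $P\in\{0,1\}^{k\times\ell}$ is an interval minor of $M\in\{0,1\}^{m\times n}$, written $P\preccurlyeq M$, if there are integers $0=r_0<\dots<r_k=m$ and $0=c_0<\dots<c_\ell=n$ such that for each 1-entry $(i,j)$ of $P$ the submatrix of $M$ on rows $(r_{i-1},r_i]$ and columns $(c_{j-1},c_j]$ contains a 1-entry; otherwise $M$ avoids $P$. $\mathrm{Av}(P)$ is the set of binary matrices avoiding $P$. A matrix $M\in\mathcal C$ is critical for $\mathcal C$ if changing any single 0-entry of $M$ into a 1-entry gives a matrix outside $\mathcal C$. A horizontal 0-run is a maximal set of consecutive 0-entries within a single row; the complexity of a row is the number of horizontal 0-runs in it. The row-complexity of $\mathcal C$ is the supremum over matrices critical for $\mathcal C$ of the maximum complexity of a row; $\mathcal C$ is row-unbounded if this supremum is infinite. *)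

theory Defs
  imports Main
begin

text \<open>A binary matrix is a triple (m, n, f): m rows, n columns, entry (i,j) (1-based,
  1 \<le> i \<le> m, 1 \<le> j \<le> n) equals 1 iff f i j. Values of f outside the range are ignored
  by all definitions below.\<close>
type_synonym bmat = "nat \<times> nat \<times> (nat \<Rightarrow> nat \<Rightarrow> bool)"

definition nrows :: "bmat \<Rightarrow> nat" where "nrows M = fst M"
definition ncols :: "bmat \<Rightarrow> nat" where "ncols M = fst (snd M)"
definition entry :: "bmat \<Rightarrow> nat \<Rightarrow> nat \<Rightarrow> bool" where "entry M = snd (snd M)"

definition interval_minor :: "bmat \<Rightarrow> bmat \<Rightarrow> bool" where
  "interval_minor P M \<longleftrightarrow>
     (\<exists>r c :: nat \<Rightarrow> nat.
        r 0 = 0 \<and> r (nrows P) = nrows M \<and> (\<forall>i < nrows P. r i < r (Suc i)) \<and>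
        c 0 = 0 \<and> c (ncols P) = ncols M \<and> (\<forall>j < ncols P. c j < c (Suc j)) \<and>
        (\<forall>i \<in> {1..nrows P}. \<forall>j \<in> {1..ncols P}. entry P i j \<longrightarrow>
           (\<exists>a \<in> {r (i - 1)<..r i}. \<exists>b \<in> {c (j - 1)<..c j}. entry M a b)))"

definition Av :: "bmat \<Rightarrow> bmat set" where
  "Av P = {M. \<not> interval_minor P M}"

definition set_one :: "bmat \<Rightarrow> nat \<Rightarrow> nat \<Rightarrow> bmat" where
  "set_one M i j = (nrows M, ncols M, (\<lambda>a b. if a = i \<and> b = j then True else entry M a b))"

definition critical :: "bmat set \<Rightarrow> bmat \<Rightarrow> bool" where
  "critical C M \<longleftrightarrow> M \<in> C \<and>
     (\<forall>i \<in> {1..nrows M}. \<forall>j \<in> {1..ncols M}. \<not> entry M i j \<longrightarrow> set_one M i j \<notin> C)"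

definition zero_runs :: "bmat \<Rightarrow> nat \<Rightarrow> nat set set" where
  "zero_runs M i = {J. \<exists>a b. 1 \<le> a \<and> a \<le> b \<and> b \<le> ncols M \<and> J = {a..b} \<and>
       (\<forall>j \<in> J. \<not> entry M i j) \<and>
       (a = 1 \<or> entry M i (a - 1)) \<and> (b = ncols M \<or> entry M i (b + 1))}"

definition row_complexity :: "bmat \<Rightarrow> nat \<Rightarrow> nat" where
  "row_complexity M i = card (zero_runs M i)"

definition row_unbounded :: "bmat set \<Rightarrow> bool" where
  "row_unbounded C \<longleftrightarrow>
     (\<forall>N :: nat. \<exists>M. critical C M \<and> (\<exists>i \<in> {1..nrows M}. row_complexity M i \<ge> N))"

definition Q1 :: bmat where
  "Q1 = (3, 3, (\<lambda>i j. (i, j) \<in> {(1,2), (2,1), (3,3)}))"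

end

theory Submission imports Defs begin

lemma cut_mono:
  fixes r :: "nat \<Rightarrow> nat"
  assumes "\<forall>i<K. r i < r (Suc i)" "i \<le> j" "j \<le> K"
  shows "r i \<le> r j"
  using assms(2,3)
proof (induction j)
  case 0 then show ?case by simp
next
  case (Suc j)
  show ?case
  proof (cases "i = Suc j")
    case True then show ?thesis by simp
  next
    case False
    then have "i \<le> j" using Suc.prems by simp
    then have "r i \<le> r j" using Suc by simp
    also have "r j < r (Suc j)" using assms(1) Suc.prems by simp
    finally show ?thesis by simp
  qed
qed

lemma cut_strict:
  fixes r :: "nat \<Rightarrow> nat"
  assumes "\<forall>i<K. r i < r (Suc i)" "i < j" "j \<le> K"
  shows "r i < r j"
proof -
  have "r i < r (Suc i)" using assms by simp
  also have "r (Suc i) \<le> r j" using cut_mono[OF assms(1)] assms by simp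
  finally show ?thesis .
qed

lemma cut_ge:
  fixes r :: "nat \<Rightarrow> nat"
  assumes "r 0 = 0" "\<forall>i<K. r i < r (Suc i)" "i \<le> K"
  shows "i \<le> r i"
  using assms(3)
proof (induction i)
  case 0 then show ?case by simp
next
  case (Suc i)
  then have "i \<le> r i" by simp
  moreover have "r i < r (Suc i)" using assms(2) Suc.prems by simp
  ultimately show ?case by simp
qed

lemma im_mono:
  assumes "interval_minor P M" "nrows M' = nrows M" "ncols M' = ncols M"
    "\<forall>a\<in>{1..nrows M}. \<forall>b\<in>{1..ncols M}. entry M a b \<longrightarrow> entry M' a b"
  shows "interval_minor P M'"
proof -
  obtain r c where rc: "r 0 = 0" "r (nrows P) = nrows M" "\<forall>i < nrows P. r i < r (Suc i)"
        "c 0 = 0" "c (ncols P) = ncols M" "\<forall>j < ncols P. c j < c (Suc j)"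
        and W: "\<forall>i \<in> {1..nrows P}. \<forall>j \<in> {1..ncols P}. entry P i j \<longrightarrow>
           (\<exists>a \<in> {r (i - 1)<..r i}. \<exists>b \<in> {c (j - 1)<..c j}. entry M a b)"
    using assms(1) unfolding interval_minor_def by blast
  have "\<forall>i \<in> {1..nrows P}. \<forall>j \<in> {1..ncols P}. entry P i j \<longrightarrow>
           (\<exists>a \<in> {r (i - 1)<..r i}. \<exists>b \<in> {c (j - 1)<..c j}. entry M' a b)"
  proof (intro ballI impI)
    fix i j assume i: "i \<in> {1..nrows P}" and j: "j \<in> {1..ncols P}" and e: "entry P i j"
    then obtain a b where a: "a \<in> {r (i - 1)<..r i}" and b: "b \<in> {c (j - 1)<..c j}" and ab: "entry M a b"
      using W by blast
    have "r i \<le> nrows M" using cut_mono[OF rc(3), of i "nrows P"] i rc(2) by simp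
    then have a1: "a \<in> {1..nrows M}" using a by auto
    have "c j \<le> ncols M" using cut_mono[OF rc(6), of j "ncols P"] j rc(5) by simp
    then have b1: "b \<in> {1..ncols M}" using b by auto
    show "\<exists>a \<in> {r (i - 1)<..r i}. \<exists>b \<in> {c (j - 1)<..c j}. entry M' a b"
      using a b ab a1 b1 assms(4) by blast
  qed
  then show ?thesis unfolding interval_minor_def using rc assms(2,3) by metis
qed


lemma im_cong:
  assumes "nrows M' = nrows M" "ncols M' = ncols M"
    "\<forall>a\<in>{1..nrows M}. \<forall>b\<in>{1..ncols M}. entry M a b = entry M' a b"
  shows "interval_minor P M' = interval_minor P M"
  using im_mono[of P M M'] im_mono[of P M' M] assms by auto

definition mk :: "nat \<Rightarrow> nat \<Rightarrow> (nat \<times> nat) set \<Rightarrow> bmat" where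
  "mk m n E = (m, n, \<lambda>a b. (a, b) \<in> E)"

lemma mk_simps[simp]: "nrows (mk m n E) = m" "ncols (mk m n E) = n" "entry (mk m n E) a b = ((a,b) \<in> E)"
  by (simp_all add: mk_def nrows_def ncols_def entry_def)

lemma crit_ext:
  assumes "M \<in> Av P"
  shows "\<exists>M'. critical (Av P) M' \<and> nrows M' = nrows M \<and> ncols M' = ncols M \<and>
     (\<forall>a\<in>{1..nrows M}. \<forall>b\<in>{1..ncols M}. entry M a b \<longrightarrow> entry M' a b)"
proof -
  define m where "m = nrows M"
  define n where "n = ncols M"
  define U where "U = {1..m} \<times> {1..n}"
  define E0 where "E0 = {(a,b)\<in>U. entry M a b}"
  define S where "S = {E. E \<subseteq> U \<and> E0 \<subseteq> E \<and> mk m n E \<in> Av P}"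
  have finU: "finite U" unfolding U_def by simp
  have "interval_minor P (mk m n E0) = interval_minor P M"
    by (rule im_cong) (auto simp: m_def n_def E0_def U_def)
  then have "E0 \<in> S" using assms unfolding S_def Av_def E0_def by auto
  have finS: "finite S" using finU unfolding S_def
    by (metis (no_types, lifting) Collect_mono Pow_def finite_Collect_subsets rev_finite_subset)
  define cm where "cm = Max (card ` S)"
  have "cm \<in> card ` S" unfolding cm_def using finS \<open>E0 \<in> S\<close> by (intro Max_in) auto
  then obtain E where E: "E \<in> S" "card E = cm" by auto
  have max: "\<And>E'. E' \<in> S \<Longrightarrow> card E' \<le> card E"
    using E(2) finS unfolding cm_def by simp
  have EU: "E \<subseteq> U" using E unfolding S_def by simp
  have finE: "finite E" using EU finU by (rule finite_subset)
  define M' where "M' = mk m n E"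
  have crit: "critical (Av P) M'"
    unfolding critical_def
  proof (intro conjI ballI impI)
    show "M' \<in> Av P" using E unfolding S_def M'_def by simp
  next
    fix i j assume i: "i \<in> {1..nrows M'}" and j: "j \<in> {1..ncols M'}" and ne: "\<not> entry M' i j"
    have ij: "(i,j) \<notin> E" using ne unfolding M'_def by simp
    have eq: "set_one M' i j = mk m n (insert (i,j) E)"
      unfolding set_one_def M'_def by (auto simp: mk_def nrows_def ncols_def entry_def fun_eq_iff)
    show "set_one M' i j \<notin> Av P"
    proof
      assume "set_one M' i j \<in> Av P"
      then have "mk m n (insert (i,j) E) \<in> Av P" using eq by simp
      then have "insert (i,j) E \<in> S" using E i j unfolding S_def M'_def U_def by auto
      then have "card (insert (i,j) E) \<le> card E" by (rule max)
      then show False using ij finE by simp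
    qed
  qed
  moreover have "\<forall>a\<in>{1..nrows M}. \<forall>b\<in>{1..ncols M}. entry M a b \<longrightarrow> entry M' a b"
    using E unfolding S_def M'_def E0_def U_def m_def n_def by auto
  ultimately show ?thesis
    by (intro exI[of _ M']) (simp add: M'_def m_def n_def)
qed

definition q1top :: "bmat \<Rightarrow> nat \<Rightarrow> nat \<Rightarrow> bool" where
  "q1top P i j \<longleftrightarrow> 1 \<le> i \<and> 1 \<le> j \<and> entry P i j \<and>
     (\<exists>i1 j1 i2 j2. i < i1 \<and> i1 < i2 \<and> i2 \<le> nrows P \<and> 1 \<le> j1 \<and> j1 < j \<and> j < j2 \<and>
        j2 \<le> ncols P \<and> entry P i1 j1 \<and> entry P i2 j2)"

lemma q1_exists:
  assumes "interval_minor Q1 P"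
  shows "\<exists>i j. q1top P i j"
proof -
  have q: "nrows Q1 = 3" "ncols Q1 = 3" "entry Q1 1 2" "entry Q1 2 1" "entry Q1 3 3"
    by (simp_all add: Q1_def nrows_def ncols_def entry_def)
  obtain r c where rc: "r 0 = 0" "r 3 = nrows P" "\<forall>i < 3. r i < r (Suc i)"
        "c 0 = 0" "c 3 = ncols P" "\<forall>j < 3. c j < c (Suc j)"
        and W: "\<forall>i \<in> {1..3}. \<forall>j \<in> {1..3}. entry Q1 i j \<longrightarrow>
           (\<exists>a \<in> {r (i - 1)<..r i}. \<exists>b \<in> {c (j - 1)<..c j}. entry P a b)"
    using assms unfolding interval_minor_def q by metis
  obtain a1 b1 where 1: "a1 \<in> {r 0<..r 1}" "b1 \<in> {c 1<..c 2}" "entry P a1 b1"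
    using W[rule_format, of 1 2] q(3) by auto
  obtain a2 b2 where 2: "a2 \<in> {r 1<..r 2}" "b2 \<in> {c 0<..c 1}" "entry P a2 b2"
    using W[rule_format, of 2 1] q(4) by auto
  obtain a3 b3 where 3: "a3 \<in> {r 2<..r 3}" "b3 \<in> {c 2<..c 3}" "entry P a3 b3"
    using W[rule_format, of 3 3] q(5) by auto
  have "q1top P a1 b1" unfolding q1top_def
    using 1 2 3 rc by (intro conjI exI[of _ a2] exI[of _ b2] exI[of _ a3] exI[of _ b3]) auto
  then show ?thesis by blast
qed


lemma div_eq_mod_less:
  fixes x y h :: nat
  assumes "x div h = y div h" "x < y"
  shows "x mod h < y mod h"
proof -
  have e1: "x = y div h * h + x mod h" using assms(1) by (metis div_mult_mod_eq)
  have e2: "y = y div h * h + y mod h" by simp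
  from assms(2) e1 e2 show ?thesis by linarith
qed

locale constr =
  fixes P :: bmat and \<rho> \<kappa> N :: nat
  assumes top: "q1top P \<rho> \<kappa>"
    and maxrow: "\<And>i j. q1top P i j \<Longrightarrow> i \<le> \<rho>"
    and Npos: "1 \<le> N"
begin

abbreviation "k \<equiv> nrows P"
abbreviation "l \<equiv> ncols P"
abbreviation "p \<equiv> entry P"

definition w :: nat where "w = Suc l"
definition h :: nat where "h = Suc k - \<rho>"

definition ff :: "nat \<Rightarrow> nat \<Rightarrow> bool" where
  "ff a b = (if a < \<rho> then b mod w \<noteq> 0 \<and> p a (b mod w)
     else if a = \<rho> then b mod w = 0
     else (a - Suc \<rho>) div h < N \<and> b div w = N - Suc ((a - Suc \<rho>) div h) \<and> b mod w \<noteq> 0 \<and>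
        p (\<rho> + (a - Suc \<rho>) mod h) (b mod w) \<and> (\<rho> + (a - Suc \<rho>) mod h \<noteq> \<rho> \<or> b mod w \<noteq> \<kappa>))"

definition MM :: bmat where "MM = (\<rho> + N * h, N * w, ff)"

lemma MM_simps[simp]: "nrows MM = \<rho> + N * h" "ncols MM = N * w" "entry MM = ff"
  by (simp_all add: MM_def nrows_def ncols_def entry_def)

lemma basic: "1 \<le> \<rho>" "\<rho> < k" "1 \<le> \<kappa>" "\<kappa> < l" "p \<rho> \<kappa>"
  using top unfolding q1top_def by auto

lemma h_pos: "0 < h" and w_pos: "0 < w" and h_eq: "\<rho> + h = Suc k"
  using basic unfolding h_def w_def by auto

lemma lower:
  assumes "\<rho> < a" "ff a b"
  shows "b mod w \<noteq> 0 \<and> (a - Suc \<rho>) div h < N \<and> b div w = N - Suc ((a - Suc \<rho>) div h) \<and>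
     p (\<rho> + (a - Suc \<rho>) mod h) (b mod w) \<and> (\<rho> + (a - Suc \<rho>) mod h \<noteq> \<rho> \<or> b mod w \<noteq> \<kappa>)"
  using assms unfolding ff_def by auto

lemma same_copy:
  assumes "\<rho> < a1" "a1 < a2" "b1 < b2" "ff a1 b1" "ff a2 b2"
  shows "(a1 - Suc \<rho>) div h = (a2 - Suc \<rho>) div h \<and> b1 div w = b2 div w"
proof -
  have l1: "(a1 - Suc \<rho>) div h < N" "b1 div w = N - Suc ((a1 - Suc \<rho>) div h)"
    using lower[OF assms(1,4)] by auto
  have l2: "(a2 - Suc \<rho>) div h < N" "b2 div w = N - Suc ((a2 - Suc \<rho>) div h)"
    using lower[of a2 b2] assms by auto
  have q: "(a1 - Suc \<rho>) div h \<le> (a2 - Suc \<rho>) div h" using assms(2) by (simp add: div_le_mono)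
  have b: "b1 div w \<le> b2 div w" using assms(3) by (simp add: div_le_mono)
  define q1 where "q1 = (a1 - Suc \<rho>) div h"
  define q2 where "q2 = (a2 - Suc \<rho>) div h"
  have "q1 = q2" using q b l1 l2 unfolding q1_def[symmetric] q2_def[symmetric] by linarith
  then show ?thesis using l1 l2 unfolding q1_def q2_def by simp
qed

lemma between_col:
  assumes "b1 < b" "b < b2" "b1 div w = b2 div w" "b1 mod w \<noteq> 0"
  shows "b div w = b1 div w \<and> b mod w \<noteq> 0 \<and> b1 mod w < b mod w \<and> b mod w < b2 mod w"
proof -
  have d1: "b1 div w \<le> b div w" "b div w \<le> b2 div w"
    using div_le_mono[OF less_imp_le[OF assms(1)]] div_le_mono[OF less_imp_le[OF assms(2)]] by auto
  then have d: "b div w = b1 div w" using assms(3) by simp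
  have "b mod w \<noteq> 0"
  proof
    assume "b mod w = 0"
    then have "b = b1 div w * w" using d by (metis add_0_right div_mult_mod_eq)
    moreover have "b1 div w * w \<le> b1" by (metis div_mult_mod_eq le_add1)
    ultimately show False using assms(1) by linarith
  qed
  then show ?thesis using d assms div_eq_mod_less[of b1 w b] div_eq_mod_less[of b w b2] by auto
qed


lemma ff_lower_eval:
  assumes "d < h" "q < N"
  shows "ff (Suc (\<rho> + q * h + d)) b = (b div w = N - Suc q \<and> b mod w \<noteq> 0 \<and>
     p (\<rho> + d) (b mod w) \<and> (d \<noteq> 0 \<or> b mod w \<noteq> \<kappa>))"
proof -
  have e: "Suc (\<rho> + q * h + d) - Suc \<rho> = q * h + d" by simp
  have dv: "(q * h + d) div h = q" "(q * h + d) mod h = d" using assms(1) h_pos by simp_all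
  show ?thesis unfolding ff_def e dv using assms(2) by auto
qed

lemma col_eval:
  assumes "j < w"
  shows "(t * w + j) div w = t" "(t * w + j) mod w = j"
  using assms w_pos by simp_all

lemma gap:
  assumes t: "t < N"
  shows "interval_minor P (set_one MM \<rho> (t * w + \<kappa>))"
proof -
  define G where "G = set_one MM \<rho> (t * w + \<kappa>)"
  have G: "nrows G = \<rho> + N * h" "ncols G = N * w"
    "\<And>a b. entry G a b = (if a = \<rho> \<and> b = t * w + \<kappa> then True else ff a b)"
    unfolding G_def set_one_def by (simp_all add: nrows_def ncols_def entry_def MM_def)
  define X where "X = (N - Suc t) * h"
  have NX: "N - Suc (N - Suc t) = t" "N - Suc t < N" using t by auto
  have Xh: "X + h \<le> N * h"
  proof -
    have "X + h = (N - Suc t + 1) * h" unfolding X_def by simp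
    also have "\<dots> \<le> N * h" using t by (intro mult_le_mono1) simp
    finally show ?thesis .
  qed
  define R where "R i = (if i < \<rho> then i else if i = k then \<rho> + N * h else Suc (\<rho> + X + (i - \<rho>)))" for i
  define C where "C j = (if j = 0 then 0 else if j = l then N * w else t * w + j)" for j
  have b1: "1 \<le> \<rho>" "\<rho> < k" "1 \<le> \<kappa>" "\<kappa> < l" using basic by auto
  have R0: "R 0 = 0" unfolding R_def using b1 by simp
  have Rk: "R k = \<rho> + N * h" unfolding R_def using b1 by simp
  have hk: "h = Suc k - \<rho>" by (simp add: h_def)
  have Rinc: "\<forall>i < k. R i < R (Suc i)"
  proof (intro allI impI)
    fix i assume i: "i < k"
    show "R i < R (Suc i)"
    proof (cases "Suc i < \<rho>")
      case True then show ?thesis unfolding R_def by simp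
    next
      case False
      show ?thesis
      proof (cases "Suc i = k")
        case True
        then have "R i = Suc (\<rho> + X + (i - \<rho>)) \<or> i < \<rho>" unfolding R_def by auto
        moreover have "Suc (\<rho> + X + (i - \<rho>)) < \<rho> + N * h" using Xh True hk b1 by linarith
        ultimately show ?thesis using True b1 Xh unfolding R_def by auto
      next
        case False
        then show ?thesis using \<open>\<not> Suc i < \<rho>\<close> i unfolding R_def by auto
      qed
    qed
  qed
  have C0: "C 0 = 0" and Cl: "C l = N * w" unfolding C_def using b1 by simp_all
  have wl: "l < w" by (simp add: w_def)
  have tw: "t * w + l < N * w"
  proof -
    have "t * w + l < t * w + w" using wl by simp
    also have "\<dots> = Suc t * w" by simp
    also have "\<dots> \<le> N * w" using t by (intro mult_le_mono1) simp
    finally show ?thesis .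
  qed
  have Cinc: "\<forall>j < l. C j < C (Suc j)"
  proof (intro allI impI)
    fix j assume j: "j < l"
    show "C j < C (Suc j)" unfolding C_def using j tw t w_pos by auto
  qed
  have wit: "\<forall>i \<in> {1..k}. \<forall>j \<in> {1..l}. p i j \<longrightarrow>
           (\<exists>a \<in> {R (i - 1)<..R i}. \<exists>b \<in> {C (j - 1)<..C j}. entry G a b)"
  proof (intro ballI impI)
    fix i j assume i: "i \<in> {1..k}" and j: "j \<in> {1..l}" and pij: "p i j"
    define b where "b = t * w + j"
    have jw: "j < w" using j wl by auto
    have bd: "b div w = t" "b mod w = j" unfolding b_def using col_eval[OF jw] by auto
    have bC: "b \<in> {C (j - 1)<..C j}"
      unfolding b_def C_def using j tw by auto
    have "\<exists>a \<in> {R (i - 1)<..R i}. entry G a b"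
    proof (cases "i < \<rho>")
      case True
      have "entry G i b" using True pij bd j unfolding G ff_def by auto
      moreover have "i \<in> {R (i - 1)<..R i}" using True i unfolding R_def by auto
      ultimately show ?thesis by blast
    next
      case False
      show ?thesis
      proof (cases "i = \<rho>")
        case True
        show ?thesis
        proof (cases "j = \<kappa>")
          case True
          have "entry G \<rho> b" unfolding G b_def using True by simp
          moreover have "\<rho> \<in> {R (\<rho> - 1)<..R \<rho>}" using b1 unfolding R_def by auto
          ultimately show ?thesis using \<open>i = \<rho>\<close> by blast
        next
          case False
          have ev: "ff (Suc (\<rho> + (N - Suc t) * h + 0)) b = (b div w = N - Suc (N - Suc t) \<and> b mod w \<noteq> 0 \<and>
            p (\<rho> + 0) (b mod w) \<and> (0 \<noteq> (0::nat) \<or> b mod w \<noteq> \<kappa>))"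
            by (rule ff_lower_eval[OF h_pos NX(2)])
          have "ff (Suc (\<rho> + (N - Suc t) * h + 0)) b"
            unfolding ev NX(1) bd using pij \<open>i = \<rho>\<close> False j by auto
          then have "entry G (Suc (\<rho> + X)) b" unfolding G X_def by simp
          moreover have "Suc (\<rho> + X) \<in> {R (i - 1)<..R i}" using b1 \<open>i = \<rho>\<close> unfolding R_def by auto
          ultimately show ?thesis by blast
        qed
      next
        case False
        then have ir: "\<rho> < i" using \<open>\<not> i < \<rho>\<close> by simp
        have dh: "i - \<rho> < h" using i hk ir by auto
        have ev: "ff (Suc (\<rho> + (N - Suc t) * h + (i - \<rho>))) b = (b div w = N - Suc (N - Suc t) \<and> b mod w \<noteq> 0 \<and>
            p (\<rho> + (i - \<rho>)) (b mod w) \<and> (i - \<rho> \<noteq> 0 \<or> b mod w \<noteq> \<kappa>))"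
          by (rule ff_lower_eval[OF dh NX(2)])
        have "ff (Suc (\<rho> + (N - Suc t) * h + (i - \<rho>))) b"
          unfolding ev NX(1) bd using pij ir j by auto
        then have "entry G (Suc (\<rho> + X + (i - \<rho>))) b" unfolding G X_def by simp
        moreover have "Suc (\<rho> + X + (i - \<rho>)) \<in> {R (i - 1)<..R i}"
        proof -
          have "R (i - 1) = Suc (\<rho> + X + (i - 1 - \<rho>))" unfolding R_def using ir b1 i by auto
          moreover have "Suc (\<rho> + X + (i - \<rho>)) \<le> R i"
            unfolding R_def using ir i Xh dh by auto
          ultimately show ?thesis using ir by auto
        qed
        ultimately show ?thesis by blast
      qed
    qed
    then show "\<exists>a \<in> {R (i - 1)<..R i}. \<exists>b \<in> {C (j - 1)<..C j}. entry G a b" using bC by blast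
  qed
  have "interval_minor P G"
    unfolding interval_minor_def
    by (rule exI[of _ R], rule exI[of _ C]) (use R0 Rk Rinc C0 Cl Cinc wit G in auto)
  then show ?thesis unfolding G_def .
qed


lemma avoid: "\<not> interval_minor P MM"
proof
  assume im: "interval_minor P MM"
  obtain r c where rc: "r 0 = 0" "r k = \<rho> + N * h" "\<forall>i<k. r i < r (Suc i)"
      "c 0 = 0" "c l = N * w" "\<forall>j<l. c j < c (Suc j)"
    and W: "\<forall>i\<in>{1..k}. \<forall>j\<in>{1..l}. p i j \<longrightarrow>
       (\<exists>a\<in>{r (i - 1)<..r i}. \<exists>b\<in>{c (j - 1)<..c j}. ff a b)"
    using im unfolding interval_minor_def MM_simps by blast
  have rmono: "\<And>i j. i \<le> j \<Longrightarrow> j \<le> k \<Longrightarrow> r i \<le> r j" using cut_mono[OF rc(3)] by blast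
  have rge: "\<And>i. i \<le> k \<Longrightarrow> i \<le> r i" using cut_ge[OF rc(1) rc(3)] by blast
  have cmono: "\<And>i j. i \<le> j \<Longrightarrow> j \<le> l \<Longrightarrow> c i \<le> c j" using cut_mono[OF rc(6)] by blast
  have b1: "1 \<le> \<rho>" "\<rho> < k" "1 \<le> \<kappa>" "\<kappa> < l" using basic by auto
  define J where "J = {j. q1top P \<rho> j}"
  define Q where "Q j a b ay \<longleftrightarrow> a \<in> {r (\<rho> - 1)<..r \<rho>} \<and> b \<in> {c (j - 1)<..c j} \<and> \<rho> < a \<and>
      (a - Suc \<rho>) mod h = 0 \<and> b mod w \<in> J \<and> b mod w \<noteq> \<kappa> \<and> b div w = N - Suc ((a - Suc \<rho>) div h) \<and>
      (a - Suc \<rho>) div h < N \<and> r \<rho> < ay \<and> \<rho> < ay \<and> (ay - Suc \<rho>) div h = (a - Suc \<rho>) div h" for j a b ay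
  have claim: "\<exists>a b ay. Q j a b ay" if jJ: "j \<in> J" for j
  proof -
    have "q1top P \<rho> j" using jJ unfolding J_def by simp
    then obtain i1 j1 i2 j2 where tj: "1 \<le> j" "p \<rho> j" "\<rho> < i1" "i1 < i2" "i2 \<le> k" "1 \<le> j1" "j1 < j" "j < j2"
        "j2 \<le> l" "p i1 j1" "p i2 j2"
      unfolding q1top_def by blast
    obtain a b where a: "a \<in> {r (\<rho> - 1)<..r \<rho>}" and b: "b \<in> {c (j - 1)<..c j}" and ab: "ff a b"
      using W[rule_format, of \<rho> j] tj b1 by auto
    obtain a1 bb1 where a1: "a1 \<in> {r (i1 - 1)<..r i1}" and bb1: "bb1 \<in> {c (j1 - 1)<..c j1}" and ab1: "ff a1 bb1"
      using W[rule_format, of i1 j1] tj by auto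
    obtain a2 bb2 where a2: "a2 \<in> {r (i2 - 1)<..r i2}" and bb2: "bb2 \<in> {c (j2 - 1)<..c j2}" and ab2: "ff a2 bb2"
      using W[rule_format, of i2 j2] tj by auto
    have "r \<rho> \<le> r (i1 - 1)" using rmono tj by auto
    then have a1r: "r \<rho> < a1" using a1 by auto
    have rr: "\<rho> \<le> r \<rho>" using rge b1 by auto
    then have a1p: "\<rho> < a1" using a1r by auto
    have "r i1 \<le> r (i2 - 1)" using rmono tj by auto
    then have a12: "a1 < a2" using a1 a2 by auto
    have "c j1 \<le> c (j2 - 1)" using cmono tj by auto
    then have b12: "bb1 < bb2" using bb1 bb2 by auto
    have sc: "(a1 - Suc \<rho>) div h = (a2 - Suc \<rho>) div h" "bb1 div w = bb2 div w"
      using same_copy[OF a1p a12 b12 ab1 ab2] by auto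
    have "c j1 \<le> c (j - 1)" using cmono tj by auto
    then have bb1b: "bb1 < b" using bb1 b by auto
    have "c j \<le> c (j2 - 1)" using cmono tj by auto
    then have bbb2: "b < bb2" using b bb2 by auto
    have L1: "bb1 mod w \<noteq> 0" "(a1 - Suc \<rho>) div h < N" "bb1 div w = N - Suc ((a1 - Suc \<rho>) div h)"
      "p (\<rho> + (a1 - Suc \<rho>) mod h) (bb1 mod w)"
      using lower[OF a1p ab1] by auto
    have L2: "p (\<rho> + (a2 - Suc \<rho>) mod h) (bb2 mod w)" using lower[of a2 bb2] a1p a12 ab2 by auto
    have bc: "b div w = bb1 div w" "b mod w \<noteq> 0" "bb1 mod w < b mod w" "b mod w < bb2 mod w"
      using between_col[OF bb1b bbb2 sc(2) L1(1)] by auto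
    have "\<rho> - 1 \<le> r (\<rho> - 1)" using rge b1 by auto
    then have ag: "\<rho> \<le> a" using a by auto
    have aa1: "a < a1" using a a1r by auto
    have ane: "a \<noteq> \<rho>"
    proof
      assume "a = \<rho>"
      then have "b mod w = 0" using ab unfolding ff_def by simp
      then show False using bc by simp
    qed
    then have ap: "\<rho> < a" using ag by simp
    have La: "(a - Suc \<rho>) div h < N" "b div w = N - Suc ((a - Suc \<rho>) div h)"
      "p (\<rho> + (a - Suc \<rho>) mod h) (b mod w)" "\<rho> + (a - Suc \<rho>) mod h \<noteq> \<rho> \<or> b mod w \<noteq> \<kappa>"
      using lower[OF ap ab] by auto
    have qeq: "(a - Suc \<rho>) div h = (a1 - Suc \<rho>) div h"
      using La(1,2) L1(2,3) bc(1) by linarith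
    have m1: "(a - Suc \<rho>) mod h < (a1 - Suc \<rho>) mod h"
      by (rule div_eq_mod_less[OF qeq]) (use ap aa1 in linarith)
    have m2: "(a1 - Suc \<rho>) mod h < (a2 - Suc \<rho>) mod h"
      by (rule div_eq_mod_less[OF sc(1)]) (use a1p a12 in linarith)
    have "(a2 - Suc \<rho>) mod h < h" using h_pos by simp
    then have k2: "\<rho> + (a2 - Suc \<rho>) mod h \<le> k" using h_eq by linarith
    have "bb2 mod w < w" using w_pos by simp
    then have l2: "bb2 mod w \<le> l" unfolding w_def by simp
    define la where "la = (a - Suc \<rho>) mod h"
    define l1 where "l1 = (a1 - Suc \<rho>) mod h"
    define l2 where "l2 = (a2 - Suc \<rho>) mod h"
    define m where "m = b mod w"
    define m1 where "m1 = bb1 mod w"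
    define m2 where "m2 = bb2 mod w"
    have F: "la < l1" "l1 < l2" "\<rho> + l2 \<le> k" "1 \<le> m1" "m1 < m" "m < m2" "m2 \<le> l"
      "p (\<rho> + la) m" "p (\<rho> + l1) m1" "p (\<rho> + l2) m2" "1 \<le> \<rho> + la" "1 \<le> m"
      unfolding la_def l1_def l2_def m_def m1_def m2_def
      using m1 m2 k2 l2 L1(1,4) L2 bc(2,3,4) La(3) b1(1) by auto
    have qt0: "q1top P (\<rho> + la) m"
      unfolding q1top_def
    proof (intro conjI)
      show "\<exists>i1 j1 i2 j2. \<rho> + la < i1 \<and> i1 < i2 \<and> i2 \<le> k \<and> 1 \<le> j1 \<and> j1 < m \<and> m < j2 \<and> j2 \<le> l \<and>
          p i1 j1 \<and> p i2 j2"
        apply (rule exI[of _ "\<rho> + l1"], rule exI[of _ m1], rule exI[of _ "\<rho> + l2"], rule exI[of _ m2])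
        using F by simp
    qed (use F in simp_all)
    have qt: "q1top P (\<rho> + (a - Suc \<rho>) mod h) (b mod w)" using qt0 unfolding la_def m_def .
    have la0: "(a - Suc \<rho>) mod h = 0" using maxrow[OF qt] by simp
    have bJ: "b mod w \<in> J" using qt la0 unfolding J_def by simp
    have bk: "b mod w \<noteq> \<kappa>" using La(4) la0 by simp
    have "Q j a b a1" unfolding Q_def
      using a b ap la0 bJ bk La(1,2) a1r a1p qeq by auto
    then show ?thesis by blast
  qed
  have band_lt: "False" if "Q u a b ay" "Q v a' b' ay'" "(a - Suc \<rho>) div h < (a' - Suc \<rho>) div h" for u v a b ay a' b' ay'
  proof -
    define q where "q = (a - Suc \<rho>) div h"
    define q' where "q' = (a' - Suc \<rho>) div h"
    have qy: "(ay - Suc \<rho>) div h = q" using that(1) unfolding Q_def q_def by simp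
    have "ay - Suc \<rho> = q * h + (ay - Suc \<rho>) mod h" using qy by (metis div_mult_mod_eq)
    moreover have "(ay - Suc \<rho>) mod h < h" using h_pos by simp
    ultimately have y1: "ay - Suc \<rho> < Suc q * h" by simp
    have "a' - Suc \<rho> = q' * h" using that(2) unfolding Q_def q'_def by (metis add_0_right div_mult_mod_eq)
    moreover have "Suc q * h \<le> q' * h" using that(3) unfolding q_def q'_def by (intro mult_le_mono1) simp
    ultimately have "ay - Suc \<rho> < a' - Suc \<rho>" using y1 by linarith
    moreover have "\<rho> < ay" "\<rho> < a'" "a' \<le> r \<rho>" "r \<rho> < ay" using that unfolding Q_def by auto
    ultimately show False by linarith
  qed
  have band_eq: "(a - Suc \<rho>) div h = (a' - Suc \<rho>) div h" if "Q u a b ay" "Q v a' b' ay'" for u v a b ay a' b' ay'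
    using band_lt[OF that] band_lt[OF that(2,1)] by (meson linorder_neqE_nat)
  define B where "B j = (SOME b. \<exists>a ay. Q j a b ay)" for j
  have QB: "\<exists>a ay. Q j a (B j) ay" if "j \<in> J" for j
    unfolding B_def using claim[OF that] by (metis (mono_tags, lifting) someI_ex)
  define g where "g j = B j mod w" for j
  have gJ: "g j \<in> J - {\<kappa>}" if "j \<in> J" for j
    using QB[OF that] unfolding Q_def g_def by auto
  have gmono: "g u < g v" if uJ: "u \<in> J" and vJ: "v \<in> J" and uv: "u < v" for u v
  proof -
    obtain a ay where A: "Q u a (B u) ay" using QB[OF uJ] by blast
    obtain a' ay' where A': "Q v a' (B v) ay'" using QB[OF vJ] by blast
    have "q1top P \<rho> v" using vJ unfolding J_def by simp
    then have vl: "v \<le> l" unfolding q1top_def by auto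
    have "c u \<le> c (v - 1)" using cmono uv vl by auto
    then have lt: "B u < B v" using A A' unfolding Q_def by auto
    have "B u div w = B v div w" using A A' band_eq[OF A A'] unfolding Q_def by simp
    then show ?thesis unfolding g_def using div_eq_mod_less lt by blast
  qed
  have inj: "inj_on g J"
    by (rule linorder_inj_onI) (metis gmono less_irrefl, simp add: nat_le_linear)
  have finJ: "finite J"
  proof (rule finite_subset)
    show "J \<subseteq> {1..l}" unfolding J_def q1top_def by auto
  qed simp
  have kJ: "\<kappa> \<in> J" using top unfolding J_def by simp
  have "card J \<le> card (J - {\<kappa>})"
    by (rule card_inj_on_le[OF inj]) (use gJ finJ in auto)
  moreover have "card (J - {\<kappa>}) = card J - 1" using kJ finJ by simp
  moreover have "card J > 0" using kJ finJ card_gt_0_iff by blast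
  ultimately show False by linarith
qed

end


lemma run_exists:
  assumes "1 \<le> g" "g \<le> ncols M" "\<not> entry M i g"
  shows "\<exists>R \<in> zero_runs M i. g \<in> R"
proof -
  define n where "n = ncols M"
  define A where "A = {a. 1 \<le> a \<and> a \<le> g \<and> (\<forall>j\<in>{a..g}. \<not> entry M i j)}"
  define B where "B = {b. g \<le> b \<and> b \<le> n \<and> (\<forall>j\<in>{g..b}. \<not> entry M i j)}"
  have gA: "g \<in> A" unfolding A_def using assms by auto
  have gB: "g \<in> B" unfolding B_def n_def using assms by auto
  have finA: "finite A" unfolding A_def by (rule finite_subset[of _ "{..g}"]) auto
  have finB: "finite B" unfolding B_def by (rule finite_subset[of _ "{..n}"]) auto
  define a0 where "a0 = Min A"
  define b0 where "b0 = Max B"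
  have a0A: "a0 \<in> A" unfolding a0_def using finA gA by (intro Min_in) auto
  have b0B: "b0 \<in> B" unfolding b0_def using finB gB by (intro Max_in) auto
  have a0min: "\<And>a. a \<in> A \<Longrightarrow> a0 \<le> a" unfolding a0_def using finA by simp
  have b0max: "\<And>b. b \<in> B \<Longrightarrow> b \<le> b0" unfolding b0_def using finB by simp
  have z: "\<forall>j\<in>{a0..b0}. \<not> entry M i j"
  proof
    fix j assume j: "j \<in> {a0..b0}"
    show "\<not> entry M i j"
    proof (cases "j \<le> g")
      case True then show ?thesis using a0A j unfolding A_def by auto
    next
      case False then show ?thesis using b0B j unfolding B_def by auto
    qed
  qed
  have left: "a0 = 1 \<or> entry M i (a0 - 1)"
  proof (rule ccontr)
    assume "\<not> (a0 = 1 \<or> entry M i (a0 - 1))"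
    then have ne: "a0 \<noteq> 1" "\<not> entry M i (a0 - 1)" by auto
    have "a0 - 1 \<in> A"
      unfolding A_def
    proof (intro CollectI conjI ballI)
      show "1 \<le> a0 - 1" using a0A ne unfolding A_def by auto
      show "a0 - 1 \<le> g" using a0A unfolding A_def by auto
      fix j assume j: "j \<in> {a0 - 1..g}"
      show "\<not> entry M i j"
      proof (cases "j = a0 - 1")
        case True then show ?thesis using ne by simp
      next
        case False then have "j \<in> {a0..g}" using j by auto
        then show ?thesis using a0A unfolding A_def by auto
      qed
    qed
    then have "a0 \<le> a0 - 1" by (rule a0min)
    then show False using a0A ne unfolding A_def by auto
  qed
  have right: "b0 = n \<or> entry M i (b0 + 1)"
  proof (rule ccontr)
    assume "\<not> (b0 = n \<or> entry M i (b0 + 1))"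
    then have ne: "b0 \<noteq> n" "\<not> entry M i (b0 + 1)" by auto
    have "b0 + 1 \<in> B"
      unfolding B_def
    proof (intro CollectI conjI ballI)
      show "g \<le> b0 + 1" using b0B unfolding B_def by auto
      show "b0 + 1 \<le> n" using b0B ne unfolding B_def by auto
      fix j assume j: "j \<in> {g..b0 + 1}"
      show "\<not> entry M i j"
      proof (cases "j = b0 + 1")
        case True then show ?thesis using ne by simp
      next
        case False then have "j \<in> {g..b0}" using j by auto
        then show ?thesis using b0B unfolding B_def by auto
      qed
    qed
    then have "b0 + 1 \<le> b0" by (rule b0max)
    then show False by simp
  qed
  have "{a0..b0} \<in> zero_runs M i"
    unfolding zero_runs_def
    using a0A b0B z left right unfolding A_def B_def n_def by auto
  moreover have "g \<in> {a0..b0}" using a0A b0B unfolding A_def B_def by auto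
  ultimately show ?thesis by blast
qed

lemma zero_runs_finite: "finite (zero_runs M i)"
proof (rule finite_subset)
  show "zero_runs M i \<subseteq> (\<lambda>(a, b). {a..b}) ` ({0..ncols M} \<times> {0..ncols M})"
    unfolding zero_runs_def by force
qed simp

theorem theorem3p4:
  fixes P :: bmat
  assumes "interval_minor Q1 P"
  shows "row_unbounded (Av P)"
  unfolding row_unbounded_def
proof
  fix Nr :: nat
  define S where "S = {i. \<exists>j. q1top P i j}"
  have Sne: "S \<noteq> {}" using q1_exists[OF assms] unfolding S_def by auto
  have finS: "finite S"
  proof (rule finite_subset)
    show "S \<subseteq> {..nrows P}" unfolding S_def q1top_def by auto
  qed simp
  define \<rho> where "\<rho> = Max S"
  have "\<rho> \<in> S" unfolding \<rho>_def using finS Sne by simp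
  then obtain \<kappa> where top: "q1top P \<rho> \<kappa>" unfolding S_def by auto
  have maxrow: "\<And>i j. q1top P i j \<Longrightarrow> i \<le> \<rho>"
  proof -
    fix i j assume "q1top P i j"
    then have "i \<in> S" unfolding S_def by auto
    then show "i \<le> \<rho>" unfolding \<rho>_def using finS by simp
  qed
  define N where "N = Suc Nr"
  interpret C: constr P \<rho> \<kappa> N
    by unfold_locales (use top maxrow in \<open>auto simp: N_def\<close>)
  have av: "C.MM \<in> Av P" using C.avoid unfolding Av_def by simp
  obtain M' where crit: "critical (Av P) M'" and dims: "nrows M' = nrows C.MM" "ncols M' = ncols C.MM"
    and sup: "\<forall>a\<in>{1..nrows C.MM}. \<forall>b\<in>{1..ncols C.MM}. entry C.MM a b \<longrightarrow> entry M' a b"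
    using crit_ext[OF av] by blast
  have M'av: "\<not> interval_minor P M'" using crit unfolding critical_def Av_def by simp
  have b1: "1 \<le> \<rho>" "\<rho> < nrows P" "1 \<le> \<kappa>" "\<kappa> < ncols P" using C.basic by auto
  have kw: "\<kappa> < C.w" using b1 unfolding C.w_def by simp
  have rho_in: "\<rho> \<in> {1..nrows M'}" using dims b1 by auto
  have gapz: "\<not> entry M' \<rho> (t * C.w + \<kappa>)" if t: "t < N" for t
  proof
    assume e: "entry M' \<rho> (t * C.w + \<kappa>)"
    have "interval_minor P M'"
    proof (rule im_mono[OF C.gap[OF t]])
      show "nrows M' = nrows (set_one C.MM \<rho> (t * C.w + \<kappa>))" using dims
        by (simp add: set_one_def nrows_def)
      show "ncols M' = ncols (set_one C.MM \<rho> (t * C.w + \<kappa>))" using dims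
        by (simp add: set_one_def ncols_def nrows_def)
      show "\<forall>a\<in>{1..nrows (set_one C.MM \<rho> (t * C.w + \<kappa>))}. \<forall>b\<in>{1..ncols (set_one C.MM \<rho> (t * C.w + \<kappa>))}.
         entry (set_one C.MM \<rho> (t * C.w + \<kappa>)) a b \<longrightarrow> entry M' a b"
        using sup e by (auto simp: set_one_def nrows_def ncols_def entry_def)
    qed
    then show False using M'av by simp
  qed
  have sep: "entry M' \<rho> (Suc t * C.w)" if t: "t < N" for t
  proof -
    have "entry C.MM \<rho> (Suc t * C.w)" by (simp add: C.ff_def)
    moreover have "Suc t * C.w \<in> {1..ncols C.MM}"
    proof -
      have "Suc t * C.w \<le> N * C.w" using t by (intro mult_le_mono1) simp
      moreover have "1 \<le> Suc t * C.w" using C.w_pos by simp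
      ultimately show ?thesis by simp
    qed
    moreover have "\<rho> \<in> {1..nrows C.MM}" using b1 by auto
    ultimately show ?thesis using sup by blast
  qed
  have ex: "\<exists>R. R \<in> zero_runs M' \<rho> \<and> t * C.w + \<kappa> \<in> R" if t: "t < N" for t
  proof -
    have "t * C.w + \<kappa> \<le> ncols M'"
    proof -
      have "t * C.w + \<kappa> < Suc t * C.w" using kw by simp
      also have "\<dots> \<le> N * C.w" using t by (intro mult_le_mono1) simp
      finally show ?thesis using dims by simp
    qed
    then show ?thesis using run_exists[of "t * C.w + \<kappa>" M' \<rho>] gapz[OF t] b1 by auto
  qed
  define Rf where "Rf t = (SOME R. R \<in> zero_runs M' \<rho> \<and> t * C.w + \<kappa> \<in> R)" for t
  have Rf: "Rf t \<in> zero_runs M' \<rho> \<and> t * C.w + \<kappa> \<in> Rf t" if "t < N" for t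
    unfolding Rf_def using ex[OF that] by (rule someI_ex)
  have Rlt: "Rf s \<noteq> Rf t" if st: "s < t" "t < N" for s t
  proof
    assume eq: "Rf s = Rf t"
    have "Rf t \<in> zero_runs M' \<rho>" using Rf st by simp
    then obtain a b where ab: "Rf t = {a..b}" "\<forall>j\<in>{a..b}. \<not> entry M' \<rho> j"
      unfolding zero_runs_def by blast
    have g1: "s * C.w + \<kappa> \<in> {a..b}" using Rf[of s] st eq ab by auto
    have g2: "t * C.w + \<kappa> \<in> {a..b}" using Rf[of t] st ab by auto
    have "s * C.w + \<kappa> < Suc s * C.w" using kw by simp
    moreover have "Suc s * C.w \<le> t * C.w" using st by (intro mult_le_mono1) simp
    ultimately have "Suc s * C.w \<in> {a..b}" using g1 g2 by auto
    moreover have "entry M' \<rho> (Suc s * C.w)" using sep st by simp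
    ultimately show False using ab(2) by blast
  qed
  have inj: "inj_on Rf {..<N}"
    by (rule linorder_inj_onI) (use Rlt in \<open>auto simp: nat_le_linear\<close>)
  have "card {..<N} \<le> card (zero_runs M' \<rho>)"
    by (rule card_inj_on_le[OF inj]) (use Rf zero_runs_finite in auto)
  then have "Nr \<le> row_complexity M' \<rho>" unfolding row_complexity_def N_def by simp
  then show "\<exists>M. critical (Av P) M \<and> (\<exists>i\<in>{1..nrows M}. Nr \<le> row_complexity M i)"
    using crit rho_in by blast
qed

end
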